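(* Let $\mathcal{M}$ be any $R\times K$ matrix with entries in a finite set $V$, let $\hat v\subseteq V$, and let $1\le L\le U$ be integers such that every stretch of $\hat v$ in every row of $\mathcal{M}$ has length in $[L,U]$. Then for each $0\le k<K-U$, $$ls^+_k+\sum_{j=L}^{U}\#^{\hat v}_{k+j}-(U-L+1)R\le 0,$$ and for each $U\le k<K$, $$ls^-_k+\sum_{j=L}^{U}\#^{\hat v}_{k-j}-(U-L+1)R\le 0,$$ where $ls^+_k=\max(0,\#^{\hat v}_k-\#^{\hat v}_{k-1})$ and $ls^-_k=\max(0,\#^{\hat v}_k-\#^{\hat v}_{k+1})$.
   Context: Columns are indexed $0,\ldots,K-1$ and rows $0,\ldots,R-1$. For $\hat v\subseteq V$ and a column $k$, $\#^{\hat v}_k$ denotes the number of rows $r$ with $\mathcal{M}_{r,k}\in\hat v$, with the convention $\#^{\hat v}_{-1}=\#^{\hat v}_{K}=0$. A stretch of $\hat v$ in row $r$ is a maximal (with respect to inclusion) interval $[a,b]$ of column indices such that $\mathcal{M}_{r,j}\in\hat v$ for all $a\le j\le b$; its length is $b-a+1$. *)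

theory Defs
  imports Main
begin

(* Matrix M with rows 0..R-1 and columns 0..K-1, given as M r k. *)

(* #^vhat_k, with convention 0 outside columns 0..K-1 (in particular at -1 and K). *)
definition colcount :: "(nat \<Rightarrow> nat \<Rightarrow> 'v) \<Rightarrow> nat \<Rightarrow> nat \<Rightarrow> 'v set \<Rightarrow> int \<Rightarrow> int" where
  "colcount M R K vhat k =
     (if 0 \<le> k \<and> k < int K then int (card {r. r < R \<and> M r (nat k) \<in> vhat}) else 0)"

definition is_stretch :: "(nat \<Rightarrow> nat \<Rightarrow> 'v) \<Rightarrow> nat \<Rightarrow> 'v set \<Rightarrow> nat \<Rightarrow> nat \<Rightarrow> nat \<Rightarrow> bool" where
  "is_stretch M K vhat r a b \<longleftrightarrow>
     a \<le> b \<and> b < K \<and> (\<forall>j. a \<le> j \<and> j \<le> b \<longrightarrow> M r j \<in> vhat) \<and>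
     (a = 0 \<or> M r (a - 1) \<notin> vhat) \<and> (b + 1 = K \<or> M r (b + 1) \<notin> vhat)"

definition ls_plus :: "(nat \<Rightarrow> nat \<Rightarrow> 'v) \<Rightarrow> nat \<Rightarrow> nat \<Rightarrow> 'v set \<Rightarrow> int \<Rightarrow> int" where
  "ls_plus M R K vhat k = max 0 (colcount M R K vhat k - colcount M R K vhat (k - 1))"

definition ls_minus :: "(nat \<Rightarrow> nat \<Rightarrow> 'v) \<Rightarrow> nat \<Rightarrow> nat \<Rightarrow> 'v set \<Rightarrow> int \<Rightarrow> int" where
  "ls_minus M R K vhat k = max 0 (colcount M R K vhat k - colcount M R K vhat (k + 1))"

end

theory Submission
  imports Defs
begin

definition ind :: "(nat \<Rightarrow> nat \<Rightarrow> 'v) \<Rightarrow> nat \<Rightarrow> 'v set \<Rightarrow> nat \<Rightarrow> int \<Rightarrow> int" where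
  "ind M K vhat r j = (if 0 \<le> j \<and> j < int K \<and> M r (nat j) \<in> vhat then 1 else 0)"

lemma colcount_sum: "colcount M R K vhat j = (\<Sum>r<R. ind M K vhat r j)"
proof (cases "0 \<le> j \<and> j < int K")
  case True
  have "(\<Sum>r<R. ind M K vhat r j) = (\<Sum>r<R. if M r (nat j) \<in> vhat then 1 else 0)"
    using True by (simp add: ind_def)
  also have "\<dots> = int (card ({..<R} \<inter> {r. M r (nat j) \<in> vhat}))"
    by (simp add: sum.If_cases)
  also have "{..<R} \<inter> {r. M r (nat j) \<in> vhat} = {r. r < R \<and> M r (nat j) \<in> vhat}" by auto
  finally have e: "(\<Sum>r<R. ind M K vhat r j) = int (card {r. r < R \<and> M r (nat j) \<in> vhat})" .
  have "colcount M R K vhat j = int (card {r. r < R \<and> M r (nat j) \<in> vhat})"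
    unfolding colcount_def using True by (simp only: if_True simp_thms)
  then show ?thesis using e by simp
next
  case False
  then have z: "\<And>r. ind M K vhat r j = 0" by (auto simp: ind_def)
  have "colcount M R K vhat j = 0" unfolding colcount_def by (rule if_not_P[OF False])
  moreover have "(\<Sum>r<R. ind M K vhat r j) = 0" by (simp only: z sum.neutral_const)
  ultimately show ?thesis by simp
qed

lemma max_sum: "max 0 (sum f A) \<le> sum (\<lambda>x. max 0 (f x)) (A::'a set)" for f :: "'a \<Rightarrow> int"
proof -
  have "sum f A \<le> sum (\<lambda>x. max 0 (f x)) A" by (rule sum_mono) simp
  moreover have "0 \<le> sum (\<lambda>x. max 0 (f x)) A" by (rule sum_nonneg) simp
  ultimately show ?thesis by simp
qed

lemma ind_01: "ind M K vhat r j = 0 \<or> ind M K vhat r j = 1"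
  by (simp add: ind_def)

lemma start_gap:
  assumes st: "\<And>a b. is_stretch M K vhat r a b \<Longrightarrow> L \<le> b - a + 1 \<and> b - a + 1 \<le> U"
    and kU: "k + U < K" and mk: "M r k \<in> vhat" and left: "k = 0 \<or> M r (k - 1) \<notin> vhat"
    and L1: "1 \<le> L"
  shows "\<exists>n. L \<le> n \<and> n \<le> U \<and> M r (k + n) \<notin> vhat"
proof -
  define P where "P n \<longleftrightarrow> 1 \<le> n \<and> (K \<le> k + n \<or> M r (k + n) \<notin> vhat)" for n
  have "P K" using kU by (simp add: P_def)
  define n where "n = Least P"
  have Pn: "P n" unfolding n_def by (rule LeastI[of P, OF \<open>P K\<close>])
  have nP: "\<And>m. m < n \<Longrightarrow> \<not> P m" unfolding n_def by (rule not_less_Least)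
  have n1: "1 \<le> n" using Pn by (simp add: P_def)
  have b: "k + n - 1 < K"
  proof (cases "n = 1")
    case True then show ?thesis using kU by simp
  next
    case False
    then have "\<not> P (n - 1)" using nP n1 by simp
    then show ?thesis using False n1 unfolding P_def by linarith
  qed
  have all: "\<forall>j. k \<le> j \<and> j \<le> k + n - 1 \<longrightarrow> M r j \<in> vhat"
  proof (intro allI impI)
    fix j assume j: "k \<le> j \<and> j \<le> k + n - 1"
    show "M r j \<in> vhat"
    proof (cases "j = k")
      case True then show ?thesis using mk by simp
    next
      case False
      have "j - k < n" using j n1 False by arith
      then have "\<not> P (j - k)" using nP by simp
      moreover have "1 \<le> j - k" "k + (j - k) = j" using j False by linarith+
      ultimately show ?thesis unfolding P_def by metis
    qed
  qed
  have "is_stretch M K vhat r k (k + n - 1)"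
    unfolding is_stretch_def using n1 b all left Pn by (auto simp: P_def)
  moreover have "k + n - 1 - k + 1 = n" using n1 by linarith
  ultimately have "L \<le> n \<and> n \<le> U" using st by metis
  moreover then have "M r (k + n) \<notin> vhat" using Pn kU by (simp add: P_def)
  ultimately show ?thesis by blast
qed

lemma end_gap:
  assumes st: "\<And>a b. is_stretch M K vhat r a b \<Longrightarrow> L \<le> b - a + 1 \<and> b - a + 1 \<le> U"
    and kU: "U \<le> k" "k < K" and mk: "M r k \<in> vhat" and right: "k + 1 = K \<or> M r (k + 1) \<notin> vhat"
    and L1: "1 \<le> L"
  shows "\<exists>n. L \<le> n \<and> n \<le> U \<and> M r (k - n) \<notin> vhat"
proof -
  define P where "P n \<longleftrightarrow> 1 \<le> n \<and> (k < n \<or> M r (k - n) \<notin> vhat)" for n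
  have "P (k+1)" by (simp add: P_def)
  define n where "n = Least P"
  have Pn: "P n" unfolding n_def by (rule LeastI[of P, OF \<open>P (k+1)\<close>])
  have nP: "\<And>m. m < n \<Longrightarrow> \<not> P m" unfolding n_def by (rule not_less_Least)
  have n1: "1 \<le> n" using Pn by (simp add: P_def)
  have b: "n - 1 \<le> k"
  proof (cases "n = 1")
    case True then show ?thesis by simp
  next
    case False
    then have "\<not> P (n - 1)" using nP n1 by simp
    then show ?thesis using False n1 unfolding P_def by linarith
  qed
  have all: "\<forall>j. k + 1 - n \<le> j \<and> j \<le> k \<longrightarrow> M r j \<in> vhat"
  proof (intro allI impI)
    fix j assume j: "k + 1 - n \<le> j \<and> j \<le> k"
    show "M r j \<in> vhat"
    proof (cases "j = k")
      case True then show ?thesis using mk by simp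
    next
      case False
      have "k - j < n" using j n1 b False by arith
      then have "\<not> P (k - j)" using nP by simp
      moreover have "1 \<le> k - j" "k - (k - j) = j" using j False by linarith+
      ultimately show ?thesis unfolding P_def by metis
    qed
  qed
  have lft: "k + 1 - n = 0 \<or> M r (k + 1 - n - 1) \<notin> vhat"
  proof (cases "k + 1 - n = 0")
    case False
    then have "n \<le> k" using b by simp
    then have "M r (k - n) \<notin> vhat" using Pn by (simp add: P_def)
    moreover have "k + 1 - n - 1 = k - n" using \<open>n \<le> k\<close> by simp
    ultimately show ?thesis by simp
  qed simp
  have "is_stretch M K vhat r (k + 1 - n) k"
    unfolding is_stretch_def using n1 b all lft right kU by auto
  moreover have "k - (k + 1 - n) + 1 = n" using n1 b by linarith
  ultimately have "L \<le> n \<and> n \<le> U" using st by metis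
  moreover then have "M r (k - n) \<notin> vhat" using Pn kU by (simp add: P_def)
  ultimately show ?thesis by blast
qed

theorem mainTheorem14:
  fixes M :: "nat \<Rightarrow> nat \<Rightarrow> 'v" and V vhat :: "'v set" and R K L U :: nat
  assumes "finite V"
    and "\<And>r k. r < R \<Longrightarrow> k < K \<Longrightarrow> M r k \<in> V"
    and "vhat \<subseteq> V"
    and "1 \<le> L" and "L \<le> U"
    and "\<And>r a b. r < R \<Longrightarrow> is_stretch M K vhat r a b \<Longrightarrow> L \<le> b - a + 1 \<and> b - a + 1 \<le> U"
  shows "(\<forall>k. 0 \<le> k \<and> k < int K - int U \<longrightarrow>
            ls_plus M R K vhat k + (\<Sum>j = int L..int U. colcount M R K vhat (k + j))
              - (int U - int L + 1) * int R \<le> 0)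
       \<and> (\<forall>k. int U \<le> k \<and> k < int K \<longrightarrow>
            ls_minus M R K vhat k + (\<Sum>j = int L..int U. colcount M R K vhat (k - j))
              - (int U - int L + 1) * int R \<le> 0)"
proof (intro conjI allI impI)
  let ?I = "{int L..int U}"
  have cardI: "int (card ?I) = int U - int L + 1" using assms(5) by simp
  have sumle: "\<And>f. (\<And>j. j \<in> ?I \<Longrightarrow> f j \<le> (1::int)) \<Longrightarrow> sum f ?I \<le> int U - int L + 1"
  proof -
    fix f :: "int \<Rightarrow> int" assume "\<And>j. j \<in> ?I \<Longrightarrow> f j \<le> 1"
    then have "sum f ?I \<le> of_nat (card ?I) * 1" by (intro sum_bounded_above) auto
    then show "sum f ?I \<le> int U - int L + 1" using cardI by simp
  qed
  have sumle2: "\<And>f n. n \<in> ?I \<Longrightarrow> f n = 0 \<Longrightarrow> (\<And>j. j \<in> ?I \<Longrightarrow> f j \<le> (1::int)) \<Longrightarrow> sum f ?I \<le> int U - int L"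
  proof -
    fix f :: "int \<Rightarrow> int" and n assume n: "n \<in> ?I" "f n = 0" and f1: "\<And>j. j \<in> ?I \<Longrightarrow> f j \<le> 1"
    have "sum f ?I = f n + sum f (?I - {n})" using n by (simp add: sum.remove)
    also have "sum f (?I - {n}) \<le> of_nat (card (?I - {n})) * 1" using f1 by (intro sum_bounded_above) auto
    moreover have "int (card (?I - {n})) = int U - int L" using n cardI by (simp add: card_Diff_singleton) (use assms(5) in arith)
    ultimately show "sum f ?I \<le> int U - int L" using n by simp
  qed
  {
    fix k :: int assume k: "0 \<le> k \<and> k < int K - int U"
    obtain k' where k': "k = int k'" using k by (metis nonneg_eq_int)
    have kU: "k' + U < K" using k k' by simp
    have row: "max 0 (ind M K vhat r k - ind M K vhat r (k - 1)) + (\<Sum>j\<in>?I. ind M K vhat r (k + j))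
        \<le> int U - int L + 1" if r: "r < R" for r
    proof (cases "ind M K vhat r k = 1 \<and> ind M K vhat r (k - 1) = 0")
      case True
      then have mk: "M r k' \<in> vhat" using k' by (simp add: ind_def split: if_splits)
      have "k' = 0 \<or> M r (k' - 1) \<notin> vhat"
      proof (cases "k' = 0")
        case False
        then have "nat (k - 1) = k' - 1" "0 \<le> k - 1" "k - 1 < int K" using k' kU by auto
        then show ?thesis using True by (simp add: ind_def split: if_splits)
      qed simp
      then obtain n where n: "L \<le> n" "n \<le> U" "M r (k' + n) \<notin> vhat"
        using start_gap[of M K vhat r L U, OF assms(6)[OF r] kU mk _ assms(4)] by blast
      have "ind M K vhat r (k + int n) = 0" using n k'
        by (simp add: ind_def nat_add_distrib)
      then have "(\<Sum>j\<in>?I. ind M K vhat r (k + j)) \<le> int U - int L"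
        using n by (intro sumle2[of "int n"]) (auto simp: ind_def)
      then show ?thesis using True by simp
    next
      case False
      then have "max 0 (ind M K vhat r k - ind M K vhat r (k - 1)) = 0"
        using ind_01[of M K vhat r k] ind_01[of M K vhat r "k-1"] by auto
      moreover have "(\<Sum>j\<in>?I. ind M K vhat r (k + j)) \<le> int U - int L + 1"
        by (intro sumle) (simp add: ind_def)
      ultimately show ?thesis by simp
    qed
    have "ls_plus M R K vhat k = max 0 (\<Sum>r<R. ind M K vhat r k - ind M K vhat r (k - 1))"
      by (simp add: ls_plus_def colcount_sum sum_subtractf)
    also have "\<dots> \<le> (\<Sum>r<R. max 0 (ind M K vhat r k - ind M K vhat r (k - 1)))" by (rule max_sum)
    finally have A: "ls_plus M R K vhat k \<le> \<dots>" .
    have B: "(\<Sum>j\<in>?I. colcount M R K vhat (k + j)) = (\<Sum>r<R. \<Sum>j\<in>?I. ind M K vhat r (k + j))"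
      by (simp add: colcount_sum sum.swap[of _ ?I])
    have "(\<Sum>r<R. max 0 (ind M K vhat r k - ind M K vhat r (k - 1))) + (\<Sum>r<R. \<Sum>j\<in>?I. ind M K vhat r (k + j))
        = (\<Sum>r<R. max 0 (ind M K vhat r k - ind M K vhat r (k - 1)) + (\<Sum>j\<in>?I. ind M K vhat r (k + j)))"
      by (simp add: sum.distrib)
    also have "\<dots> \<le> (\<Sum>r<R. int U - int L + 1)" by (rule sum_mono) (use row in auto)
    also have "\<dots> = (int U - int L + 1) * int R" by simp
    finally show "ls_plus M R K vhat k + (\<Sum>j = int L..int U. colcount M R K vhat (k + j))
              - (int U - int L + 1) * int R \<le> 0" using A B by linarith
  }
  {
    fix k :: int assume k: "int U \<le> k \<and> k < int K"
    obtain k' where k': "k = int k'" using k by (metis of_nat_0_le_iff order_trans nonneg_eq_int)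
    have kU: "U \<le> k'" "k' < K" using k k' by auto
    have row: "max 0 (ind M K vhat r k - ind M K vhat r (k + 1)) + (\<Sum>j\<in>?I. ind M K vhat r (k - j))
        \<le> int U - int L + 1" if r: "r < R" for r
    proof (cases "ind M K vhat r k = 1 \<and> ind M K vhat r (k + 1) = 0")
      case True
      then have mk: "M r k' \<in> vhat" using k' by (simp add: ind_def split: if_splits)
      have "k' + 1 = K \<or> M r (k' + 1) \<notin> vhat"
      proof (cases "k' + 1 = K")
        case False
        then have "nat (k + 1) = k' + 1" "0 \<le> k + 1" "k + 1 < int K" using k' kU by auto
        then show ?thesis using True by (simp add: ind_def split: if_splits)
      qed simp
      then obtain n where n: "L \<le> n" "n \<le> U" "M r (k' - n) \<notin> vhat"
        using end_gap[of M K vhat r L U, OF assms(6)[OF r] kU mk _ assms(4)] by blast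
      have "nat (k - int n) = k' - n" using k' n kU by auto
      then have "ind M K vhat r (k - int n) = 0" using n k'
        by (simp add: ind_def)
      then have "(\<Sum>j\<in>?I. ind M K vhat r (k - j)) \<le> int U - int L"
        using n by (intro sumle2[of "int n"]) (auto simp: ind_def)
      then show ?thesis using True by simp
    next
      case False
      then have "max 0 (ind M K vhat r k - ind M K vhat r (k + 1)) = 0"
        using ind_01[of M K vhat r k] ind_01[of M K vhat r "k+1"] by auto
      moreover have "(\<Sum>j\<in>?I. ind M K vhat r (k - j)) \<le> int U - int L + 1"
        by (intro sumle) (simp add: ind_def)
      ultimately show ?thesis by simp
    qed
    have "ls_minus M R K vhat k = max 0 (\<Sum>r<R. ind M K vhat r k - ind M K vhat r (k + 1))"
      by (simp add: ls_minus_def colcount_sum sum_subtractf)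
    also have "\<dots> \<le> (\<Sum>r<R. max 0 (ind M K vhat r k - ind M K vhat r (k + 1)))" by (rule max_sum)
    finally have A: "ls_minus M R K vhat k \<le> \<dots>" .
    have B: "(\<Sum>j\<in>?I. colcount M R K vhat (k - j)) = (\<Sum>r<R. \<Sum>j\<in>?I. ind M K vhat r (k - j))"
      by (simp add: colcount_sum sum.swap[of _ ?I])
    have "(\<Sum>r<R. max 0 (ind M K vhat r k - ind M K vhat r (k + 1))) + (\<Sum>r<R. \<Sum>j\<in>?I. ind M K vhat r (k - j))
        = (\<Sum>r<R. max 0 (ind M K vhat r k - ind M K vhat r (k + 1)) + (\<Sum>j\<in>?I. ind M K vhat r (k - j)))"
      by (simp add: sum.distrib)
    also have "\<dots> \<le> (\<Sum>r<R. int U - int L + 1)" by (rule sum_mono) (use row in auto)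
    also have "\<dots> = (int U - int L + 1) * int R" by simp
    finally show "ls_minus M R K vhat k + (\<Sum>j = int L..int U. colcount M R K vhat (k - j))
              - (int U - int L + 1) * int R \<le> 0" using A B by linarith
  }
qed

end
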